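(* If a closed convex cone $K$ in a finite-dimensional real Euclidean space $\mathbb{E}$ is strongly tangentially exposed, then $K$ is facially dual complete.
   Context: $\mathbb{E}$ is identified with its dual. Tangent cone: $\mathcal{T}(x;C)=\operatorname{cl}\{d: x+\epsilon d\in C\text{ for some }\epsilon>0\}$ for closed convex $C$ and $x\in C$. A face of a closed convex set $C$ is a closed convex $F\subseteq C$ such that $x\in F$, $y,z\in C$, $x\in(y,z)$ imply $y,z\in F$. A closed convex cone $K$ is tangentially exposed if $\mathcal{T}(x;K)\cap\operatorname{span}F=\mathcal{T}(x;F)$ for every face $F\neq K$ of $K$ and every $x\in F$. For a family $\mathcal{K}$ of closed convex sets, $\mathcal{T}(\mathcal{K})$ is the set of all $\mathcal{T}(x;C)$ with $C\in\mathcal{K}$, $x\in C$; $\mathcal{T}^0(\mathcal{K})=\mathcal{K}$, $\mathcal{T}^k(\mathcal{K})=\mathcal{T}(\mathcal{T}^{k-1}(\mathcal{K}))$. The lexicographic tangent cones of $C$ are the elements of $\mathcal{T}^k(\{C\})$, $k\ge1$. A closed convex set is strongly tangentially exposed if it and all of its lexicographic tangent cones are tangentially exposed. $K^*=\{s:\langle s,x\rangle\ge0\ \forall x\in K\}$, $F^\perp=\{s:\langle s,x\rangle=0\ \forall x\in F\}$; $K$ is facially dual complete (FDC) if $K^*+F^\perp$ is closed for every nonempty face $F\neq K$. *)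

theory Defs
  imports "HOL-Analysis.Analysis"
begin

definition tangent_cone :: "'a::euclidean_space \<Rightarrow> 'a set \<Rightarrow> 'a set" where
  "tangent_cone x C = closure {d. \<exists>\<epsilon>>0. x + \<epsilon> *\<^sub>R d \<in> C}"

definition is_face :: "'a::euclidean_space set \<Rightarrow> 'a set \<Rightarrow> bool" where
  "is_face F C \<longleftrightarrow> closed F \<and> convex F \<and> F \<subseteq> C \<and>
     (\<forall>x\<in>F. \<forall>y\<in>C. \<forall>z\<in>C. x \<in> open_segment y z \<longrightarrow> y \<in> F \<and> z \<in> F)"

definition tangentially_exposed :: "'a::euclidean_space set \<Rightarrow> bool" where
  "tangentially_exposed K \<longleftrightarrow>
     (\<forall>F. is_face F K \<and> F \<noteq> K \<longrightarrow> (\<forall>x\<in>F. tangent_cone x K \<inter> span F = tangent_cone x F))"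

definition tangent_family :: "'a::euclidean_space set set \<Rightarrow> 'a set set" where
  "tangent_family \<K> = {tangent_cone x C | x C. C \<in> \<K> \<and> x \<in> C}"

definition lex_tangent_cones :: "'a::euclidean_space set \<Rightarrow> 'a set set" where
  "lex_tangent_cones C = (\<Union>k\<in>{1..}. (tangent_family ^^ k) {C})"

definition strongly_tangentially_exposed :: "'a::euclidean_space set \<Rightarrow> bool" where
  "strongly_tangentially_exposed C \<longleftrightarrow>
     tangentially_exposed C \<and> (\<forall>D\<in>lex_tangent_cones C. tangentially_exposed D)"

definition dual_cone :: "'a::euclidean_space set \<Rightarrow> 'a set" where
  "dual_cone K = {s. \<forall>x\<in>K. s \<bullet> x \<ge> 0}"

definition perp :: "'a::euclidean_space set \<Rightarrow> 'a set" where
  "perp F = {s. \<forall>x\<in>F. s \<bullet> x = 0}"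

definition facially_dual_complete :: "'a::euclidean_space set \<Rightarrow> bool" where
  "facially_dual_complete K \<longleftrightarrow>
     (\<forall>F. is_face F K \<and> F \<noteq> {} \<and> F \<noteq> K \<longrightarrow>
        closed {s + t | s t. s \<in> dual_cone K \<and> t \<in> perp F})"

end

theory Submission
  imports Defs
begin

definition nice :: "'a::euclidean_space set \<Rightarrow> bool" where
 "nice K \<longleftrightarrow> (\<forall>F. is_face F K \<and> F \<noteq> {} \<and> F \<noteq> K \<longrightarrow>
     (\<forall>s\<in>dual_cone F. \<exists>k\<in>dual_cone K. \<exists>p\<in>perp F. s = k + p))"

lemma is_face_iff: "is_face F C \<longleftrightarrow> closed F \<and> F face_of C"
  unfolding is_face_def face_of_def by blast

lemma cc_add: "convex K \<Longrightarrow> cone K \<Longrightarrow> x \<in> K \<Longrightarrow> y \<in> K \<Longrightarrow> x + y \<in> K"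
  using convex_cone by blast

lemma face_zero:
  fixes K :: "'a::euclidean_space set"
  assumes "cone K" "F face_of K" "F \<noteq> {}"
  shows "0 \<in> F"
proof -
  obtain x where x: "x \<in> F" using assms by auto
  show ?thesis
  proof (cases "x = 0")
    case True thus ?thesis using x by simp
  next
    case False
    have xK: "x \<in> K" using x assms face_of_imp_subset by blast
    have "0 \<in> K" using assms(1) xK cone_contains_0 by blast
    moreover have "2 *\<^sub>R x \<in> K" using mem_cone[OF assms(1) xK, of 2] by simp
    moreover have "x \<in> open_segment 0 (2 *\<^sub>R x)" using False
      by (auto simp: in_segment intro!: exI[of _ "1/2"])
    ultimately show ?thesis using assms(2) x unfolding face_of_def by blast
  qed
qed

lemma face_cone:
  fixes K :: "'a::euclidean_space set"
  assumes "cone K" "F face_of K" "F \<noteq> {}"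
  shows "cone F"
  unfolding cone_def
proof (intro ballI allI impI)
  fix x and c :: real assume x: "x \<in> F" and c: "0 \<le> c"
  have z: "0 \<in> F" using face_zero assms by blast
  have xK: "x \<in> K" using x assms face_of_imp_subset by blast
  show "c *\<^sub>R x \<in> F"
  proof (cases "c \<le> 1")
    case True
    have "convex F" using assms face_of_imp_convex by blast
    then have "(1 - c) *\<^sub>R 0 + c *\<^sub>R x \<in> F" using convexD[OF _ z x, of "1 - c" c] c True by simp
    then show ?thesis by simp
  next
    case False
    show ?thesis
    proof (cases "x = 0")
      case True then show ?thesis using z by simp
    next
      case x0: False
      have "0 \<in> K" using assms(1) xK cone_contains_0 by blast
      moreover have "c *\<^sub>R x \<in> K" using mem_cone[OF assms(1) xK] c by simp
      moreover have "x \<in> open_segment 0 (c *\<^sub>R x)" using x0 False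
        by (auto simp: in_segment intro!: exI[of _ "1/c"])
      ultimately show ?thesis using assms(2) x unfolding face_of_def by blast
    qed
  qed
qed

lemma lin_in_face:
  fixes K :: "'a::euclidean_space set"
  assumes "cone K" "F face_of K" "F \<noteq> {}" "l \<in> K" "-l \<in> K"
  shows "l \<in> F"
proof (cases "l = 0")
  case True then show ?thesis using face_zero assms by blast
next
  case False
  have ne: "l \<noteq> -l"
  proof
    assume "l = -l"
    then have "(2::real) *\<^sub>R l = 0" by (metis add.right_inverse scaleR_2)
    then show False using False by simp
  qed
  have "0 \<in> open_segment l (-l)" using ne
    by (auto simp: in_segment intro!: exI[of _ "1/2"])
  then show ?thesis using assms face_zero[OF assms(1-3)] unfolding face_of_def by blast
qed

lemma span_cone_diff:
  fixes F :: "'a::euclidean_space set"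
  assumes "convex F" "cone F" "F \<noteq> {}" "y \<in> span F"
  shows "\<exists>a\<in>F. \<exists>b\<in>F. y = a - b"
proof -
  let ?D = "{a - b | a b. a \<in> F \<and> b \<in> F}"
  have z: "0 \<in> F" using assms cone_contains_0 by blast
  have add: "\<And>x y. x \<in> F \<Longrightarrow> y \<in> F \<Longrightarrow> x + y \<in> F" using assms cc_add by blast
  have sc: "\<And>x c. x \<in> F \<Longrightarrow> 0 \<le> c \<Longrightarrow> c *\<^sub>R x \<in> F" using assms mem_cone by blast
  have "subspace ?D"
    unfolding subspace_def
  proof (intro conjI ballI allI)
    show "0 \<in> ?D" using z by force
  next
    fix x y assume "x \<in> ?D" "y \<in> ?D"
    then obtain a b c d where "a \<in> F" "b \<in> F" "c \<in> F" "d \<in> F" "x = a - b" "y = c - d" by blast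
    then have "x + y = (a + c) - (b + d)" "a + c \<in> F" "b + d \<in> F" using add by (auto simp: algebra_simps)
    then show "x + y \<in> ?D" by blast
  next
    fix c :: real and x assume "x \<in> ?D"
    then obtain a b where ab: "a \<in> F" "b \<in> F" "x = a - b" by blast
    show "c *\<^sub>R x \<in> ?D"
    proof (cases "0 \<le> c")
      case True
      have "c *\<^sub>R x = c *\<^sub>R a - c *\<^sub>R b" using ab by (simp add: scaleR_diff_right)
      moreover have "c *\<^sub>R a \<in> F" "c *\<^sub>R b \<in> F" using ab sc True by auto
      ultimately show ?thesis by blast
    next
      case False
      have "c *\<^sub>R x = (-c) *\<^sub>R b - (-c) *\<^sub>R a" using ab by (simp add: scaleR_diff_right)
      moreover have "(-c) *\<^sub>R b \<in> F" "(-c) *\<^sub>R a \<in> F" using sc[OF ab(2), of "-c"] sc[OF ab(1), of "-c"] False by auto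
      ultimately show ?thesis by blast
    qed
  qed
  moreover have "F \<subseteq> ?D" using z by force
  ultimately have "span F \<subseteq> ?D" using span_minimal by blast
  then show ?thesis using assms(4) by blast
qed

lemma face_span:
  fixes K :: "'a::euclidean_space set"
  assumes "convex K" "cone K" "F face_of K" "F \<noteq> {}" "y \<in> K" "y \<in> span F"
  shows "y \<in> F"
proof -
  have cF: "cone F" using face_cone assms by blast
  have vF: "convex F" using assms face_of_imp_convex by blast
  obtain a b where ab: "a \<in> F" "b \<in> F" "y = a - b" using span_cone_diff[OF vF cF assms(4,6)] by blast
  have bK: "b \<in> K" using ab assms face_of_imp_subset by blast
  have ha: "(1/2) *\<^sub>R a \<in> F" using mem_cone[OF cF ab(1), of "1/2"] by simp
  show ?thesis
  proof (cases "y = b")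
    case True then show ?thesis using ab by simp
  next
    case False
    have e: "(1/2) *\<^sub>R a = (1 - 1/2) *\<^sub>R y + (1/2) *\<^sub>R b" using ab
      by (simp add: scaleR_diff_right)
    have "(1/2) *\<^sub>R a \<in> open_segment y b" using False unfolding in_segment
      by (intro conjI exI[of _ "1/2"]) (use e in auto)
    then show ?thesis using assms(3) ha bK assms(5) unfolding face_of_def by blast
  qed
qed

lemma sep_cone:
  fixes C :: "'a::euclidean_space set"
  assumes "0 \<in> C" "\<And>x c. x \<in> C \<Longrightarrow> c > 0 \<Longrightarrow> c *\<^sub>R x \<in> C" "\<forall>x\<in>C. a \<bullet> x > b"
  shows "b < 0" "\<forall>x\<in>C. a \<bullet> x \<ge> 0"
proof -
  show b: "b < 0" using assms(1,3) by force
  show "\<forall>x\<in>C. a \<bullet> x \<ge> 0"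
  proof (intro ballI, rule ccontr)
    fix x assume x: "x \<in> C" and "\<not> 0 \<le> a \<bullet> x"
    then have neg: "a \<bullet> x < 0" by simp
    define c where "c = b / (a \<bullet> x)"
    have "c > 0" using b neg by (simp add: c_def divide_neg_neg)
    have "c *\<^sub>R x \<in> C" using assms(2) x \<open>c>0\<close> by simp
    then have "a \<bullet> (c *\<^sub>R x) > b" using assms(3) by blast
    moreover have "a \<bullet> (c *\<^sub>R x) = b" using neg by (simp add: c_def)
    ultimately show False by simp
  qed
qed

lemma bipolar:
  fixes C :: "'a::euclidean_space set"
  assumes "closed C" "convex C" "cone C" "C \<noteq> {}" "\<forall>a\<in>dual_cone C. a \<bullet> y \<ge> 0"
  shows "y \<in> C"
proof (rule ccontr)
  assume "y \<notin> C"
  then obtain a b where ab: "a \<bullet> y < b" "\<forall>x\<in>C. a \<bullet> x > b"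
    using separating_hyperplane_closed_point assms by blast
  have 0: "0 \<in> C" using assms cone_contains_0 by blast
  have sc: "\<And>x c. x \<in> C \<Longrightarrow> c > 0 \<Longrightarrow> c *\<^sub>R x \<in> C" by (meson assms(3) less_imp_le mem_cone)
  have b: "b < 0" and pos: "\<forall>x\<in>C. a \<bullet> x \<ge> 0" using sep_cone[OF 0 sc ab(2)] by auto
  have "a \<in> dual_cone C" unfolding dual_cone_def using pos by blast
  then have "a \<bullet> y \<ge> 0" using assms(5) by blast
  then show False using ab b by simp
qed

lemma perp_perp:
  fixes S :: "'a::euclidean_space set"
  assumes "\<forall>p\<in>perp S. y \<bullet> p = 0"
  shows "y \<in> span S"
proof -
  obtain u z where u: "u \<in> span S" and z: "\<And>w. w \<in> span S \<Longrightarrow> orthogonal z w" and y: "y = u + z"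
    using orthogonal_subspace_decomp_exists by metis
  have "z \<in> perp S" unfolding perp_def using z span_base orthogonal_def by blast
  then have "y \<bullet> z = 0" using assms by blast
  moreover have "u \<bullet> z = 0" using z[OF u] by (simp add: orthogonal_def inner_commute)
  ultimately have "z \<bullet> z = 0" using y by (simp add: inner_add_left)
  then have "z = 0" by simp
  then show ?thesis using u y by simp
qed

lemma convex_dual_cone: "convex (dual_cone K)"
  unfolding dual_cone_def convex_def
  by (auto simp: inner_add_left intro!: add_nonneg_nonneg mult_nonneg_nonneg)

lemma closed_dual_cone: "closed (dual_cone K)"
proof -
  have "dual_cone K = (\<Inter>x\<in>K. {s. s \<bullet> x \<ge> 0})" unfolding dual_cone_def by blast
  moreover have "closed {s. s \<bullet> x \<ge> 0}" for x :: 'a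
    using closed_halfspace_ge[of 0 x] by (simp add: inner_commute)
  ultimately show ?thesis by auto
qed

lemma subspace_perp: "subspace (perp S)"
  unfolding subspace_def perp_def by (auto simp: inner_add_left)

lemma dual_sub_closure:
  fixes K :: "'a::euclidean_space set"
  assumes "closed K" "convex K" "cone K" "K \<noteq> {}"
  shows "dual_cone (K \<inter> span S) \<subseteq> closure {k + p | k p. k \<in> dual_cone K \<and> p \<in> perp S}"
proof
  fix y assume y: "y \<in> dual_cone (K \<inter> span S)"
  define C where "C = {k + p | k p. k \<in> dual_cone K \<and> p \<in> perp S}"
  have Ci: "k + p \<in> C" if "k \<in> dual_cone K" "p \<in> perp S" for k p using that unfolding C_def by blast
  have Ce: "\<exists>k p. k \<in> dual_cone K \<and> p \<in> perp S \<and> x = k + p" if "x \<in> C" for x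
    using that unfolding C_def by blast
  show "y \<in> closure C"
  proof (rule ccontr)
    assume ny: "y \<notin> closure C"
    have eqC: "C = (\<Union>x\<in> dual_cone K. \<Union>y \<in> perp S. {x + y})" unfolding C_def by blast
    have cvx: "convex C" unfolding eqC by (rule convex_sums[OF convex_dual_cone subspace_imp_convex[OF subspace_perp]])
    obtain a b where ab: "a \<bullet> y < b" "\<forall>x\<in>closure C. a \<bullet> x > b"
      using separating_hyperplane_closed_point[OF convex_closure[OF cvx] closed_closure ny] by blast
    have ab2: "\<forall>x\<in>C. a \<bullet> x > b" using ab(2) closure_subset[of C] by (meson subsetD)
    have d0: "0 \<in> dual_cone K" by (simp add: dual_cone_def)
    have p0: "0 \<in> perp S" by (simp add: perp_def)
    have 0: "0 \<in> C" using Ci[OF d0 p0] by simp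
    have sc: "x \<in> C \<Longrightarrow> c > 0 \<Longrightarrow> c *\<^sub>R x \<in> C" for x c
    proof -
      assume "x \<in> C" "c > 0"
      then obtain k p where kp: "k \<in> dual_cone K" "p \<in> perp S" "x = k + p" using Ce by blast
      have "c *\<^sub>R k \<in> dual_cone K" using kp \<open>c>0\<close> by (auto simp: dual_cone_def)
      moreover have "c *\<^sub>R p \<in> perp S" using kp by (auto simp: perp_def)
      moreover have "c *\<^sub>R x = c *\<^sub>R k + c *\<^sub>R p" using kp by (simp add: scaleR_add_right)
      ultimately show ?thesis using Ci by simp
    qed
    have b: "b < 0" and pos: "\<forall>x\<in>C. a \<bullet> x \<ge> 0" using sep_cone[OF 0 sc ab2] by auto
    have "\<forall>k\<in>dual_cone K. k \<bullet> a \<ge> 0"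
    proof
      fix k assume "k \<in> dual_cone K"
      then have "k + 0 \<in> C" using Ci p0 by blast
      then have "a \<bullet> (k + 0) \<ge> 0" using pos by blast
      then show "k \<bullet> a \<ge> 0" by (simp add: inner_commute)
    qed
    then have aK: "a \<in> K" using bipolar[OF assms] by blast
    have "\<forall>p\<in>perp S. a \<bullet> p = 0"
    proof
      fix p assume p: "p \<in> perp S"
      then have mp: "-p \<in> perp S" by (simp add: perp_def)
      have "0 + p \<in> C" "0 + -p \<in> C" using Ci[OF d0 p] Ci[OF d0 mp] by auto
      then have "a \<bullet> p \<ge> 0" "a \<bullet> (-p) \<ge> 0" using pos by auto
      then show "a \<bullet> p = 0" by simp
    qed
    then have "a \<in> span S" by (rule perp_perp)
    then have "y \<bullet> a \<ge> 0" using y aK unfolding dual_cone_def by blast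
    then show False using ab b by (simp add: inner_commute)
  qed
qed

lemma ri_extend:
  fixes H :: "'a::euclidean_space set"
  assumes "z \<in> rel_interior H" "h \<in> H"
  shows "\<exists>\<epsilon>>0. (1 + \<epsilon>) *\<^sub>R z - \<epsilon> *\<^sub>R h \<in> H"
proof -
  obtain e where e: "e > 0" "cball z e \<inter> affine hull H \<subseteq> H" "z \<in> H"
    using assms(1) mem_rel_interior_cball by blast
  define \<epsilon> where "\<epsilon> = e / (norm (z - h) + 1)"
  have "norm (z - h) + 1 > 0" by (simp add: add_nonneg_pos)
  then have ep: "\<epsilon> > 0" using e by (simp add: \<epsilon>_def)
  let ?p = "(1 + \<epsilon>) *\<^sub>R z - \<epsilon> *\<^sub>R h"
  have eq: "?p - z = \<epsilon> *\<^sub>R (z - h)" by (simp add: algebra_simps)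
  have "dist z ?p = norm (?p - z)" by (simp add: dist_norm norm_minus_commute)
  also have "\<dots> = norm (\<epsilon> *\<^sub>R (z - h))" using eq by simp
  also have "\<dots> = \<epsilon> * norm (z - h)" using ep by simp
  also have "\<dots> \<le> e"
  proof -
    have "\<epsilon> * norm (z - h) = e * (norm (z - h) / (norm (z - h) + 1))" by (simp add: \<epsilon>_def)
    also have "\<dots> \<le> e * 1"
    proof (intro mult_left_mono)
      show "norm (z - h) / (norm (z - h) + 1) \<le> 1"
        by (subst divide_le_eq_1) (auto simp: add_nonneg_pos)
    qed (use e in auto)
    finally show ?thesis by simp
  qed
  finally have pc: "?p \<in> cball z e" by simp
  have zA: "z \<in> affine hull H" using e(3) by (rule hull_inc)
  have hA: "h \<in> affine hull H" using assms(2) by (rule hull_inc)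
  have "(1 + \<epsilon>) *\<^sub>R z + (- \<epsilon>) *\<^sub>R h \<in> affine hull H"
    using affine_def[THEN iffD1, OF affine_affine_hull[of H], rule_format, OF zA hA, of "1 + \<epsilon>" "- \<epsilon>"] by simp
  then have "?p \<in> affine hull H" by simp
  then show ?thesis using pc e ep by blast
qed

lemma face_ri:
  fixes T :: "'a::euclidean_space set"
  assumes "convex T" "z \<in> T"
  shows "\<exists>H. H face_of T \<and> z \<in> rel_interior H"
proof -
  define H where "H = \<Inter>{F. F face_of T \<and> z \<in> F}"
  have Hf: "H face_of T" unfolding H_def
    by (rule face_of_Inter) (use assms face_of_refl in auto)
  have zH: "z \<in> H" unfolding H_def by blast
  show ?thesis
  proof (rule ccontr)
    assume "\<nexists>H. H face_of T \<and> z \<in> rel_interior H"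
    then have nz: "z \<notin> rel_interior H" using Hf by blast
    have cH: "convex H" using Hf face_of_imp_convex by blast
    obtain a where a: "a \<noteq> 0" "\<And>y. y \<in> H \<Longrightarrow> a \<bullet> z \<le> a \<bullet> y" "\<And>y. y \<in> rel_interior H \<Longrightarrow> a \<bullet> z < a \<bullet> y"
      using supporting_hyperplane_rel_boundary[OF cH zH nz] by blast
    have "H \<inter> {y. a \<bullet> y = a \<bullet> z} face_of H" using face_of_Int_supporting_hyperplane_ge[OF cH] a(2) by blast
    then have G: "H \<inter> {y. a \<bullet> y = a \<bullet> z} face_of T" using face_of_trans Hf by blast
    have "z \<in> H \<inter> {y. a \<bullet> y = a \<bullet> z}" using zH by simp
    then have sub: "H \<subseteq> H \<inter> {y. a \<bullet> y = a \<bullet> z}" using G unfolding H_def by blast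
    obtain y where y: "y \<in> rel_interior H" using rel_interior_eq_empty[OF cH] zH by blast
    then have "y \<in> H" using rel_interior_subset by blast
    then have "a \<bullet> y = a \<bullet> z" using sub by blast
    then show False using a(3)[OF y] by simp
  qed
qed

lemma lin_bound:
  fixes b q r :: real
  assumes "\<And>\<mu>. \<mu> > 0 \<Longrightarrow> b \<le> \<mu> * q + r"
  shows "0 \<le> q"
proof (rule ccontr)
  assume "\<not> 0 \<le> q"
  then have q: "q < 0" by simp
  define \<mu> where "\<mu> = (\<bar>b\<bar> + \<bar>r\<bar> + 1) / (- q)"
  have "\<bar>b\<bar> + \<bar>r\<bar> + 1 > 0" by simp
  then have l: "\<mu> > 0" using q unfolding \<mu>_def by (intro divide_pos_pos) auto
  have "\<mu> * q = - (\<bar>b\<bar> + \<bar>r\<bar> + 1)" using q by (simp add: \<mu>_def)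
  then have "\<mu> * q + r < b" by linarith
  then show False using assms[OF l] by simp
qed

lemma slater:
  fixes H :: "'a::euclidean_space set"
  assumes "convex H" "cone H" "subspace V" "z \<in> rel_interior H" "z \<in> V"
    and s: "\<forall>y\<in>H \<inter> V. s \<bullet> y \<ge> 0"
  shows "\<exists>h\<in>dual_cone H. s - h \<in> perp V"
proof -
  define W where "W = perp H \<inter> perp V"
  define S1 :: "('a \<times> real) set" where "S1 = {(v, s \<bullet> v) | v. v \<in> V}"
  define S2 :: "('a \<times> real) set" where "S2 = {(h + w, t) | h w t. h \<in> H \<and> w \<in> W \<and> t < 0}"
  have zH: "z \<in> H" using assms(4) rel_interior_subset by blast
  have H0: "0 \<in> H" using zH assms(2) cone_contains_0 by blast
  have V0: "0 \<in> V" using assms(3) subspace_0 by blast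
  have W0: "0 \<in> W" by (simp add: W_def perp_def)
  have sW: "subspace W" unfolding W_def by (intro subspace_inter subspace_perp)
  have c1: "convex S1"
    unfolding convex_def S1_def
  proof (clarify)
    fix u v :: real and x y assume "0 \<le> u" "0 \<le> v" "u + v = 1" "x \<in> V" "y \<in> V"
    then have "u *\<^sub>R x + v *\<^sub>R y \<in> V" using assms(3) by (simp add: subspace_add subspace_scale)
    moreover have "u *\<^sub>R (x, s \<bullet> x) + v *\<^sub>R (y, s \<bullet> y) = (u *\<^sub>R x + v *\<^sub>R y, s \<bullet> (u *\<^sub>R x + v *\<^sub>R y))"
      by (simp add: inner_add_right)
    ultimately show "\<exists>w. u *\<^sub>R (x, s \<bullet> x) + v *\<^sub>R (y, s \<bullet> y) = (w, s \<bullet> w) \<and> w \<in> V" by blast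
  qed
  have c2: "convex S2"
    unfolding convex_def S2_def
  proof (clarify)
    fix u v t1 t2 :: real and h1 w1 h2 w2 :: 'a
    assume uv: "0 \<le> u" "0 \<le> v" "u + v = 1" and a: "h1 \<in> H" "w1 \<in> W" "t1 < 0" "h2 \<in> H" "w2 \<in> W" "t2 < 0"
    have "u *\<^sub>R h1 + v *\<^sub>R h2 \<in> H" using uv a assms(1) convexD by blast
    moreover have "u *\<^sub>R w1 + v *\<^sub>R w2 \<in> W" using a sW by (simp add: subspace_add subspace_scale)
    moreover have "u * t1 + v * t2 < 0"
    proof (cases "u = 0")
      case True then show ?thesis using uv a by simp
    next
      case False
      then have "u * t1 < 0" using uv a by (simp add: mult_pos_neg)
      moreover have "v * t2 \<le> 0" using uv a by (simp add: mult_nonneg_nonpos)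
      ultimately show ?thesis by simp
    qed
    moreover have "u *\<^sub>R (h1 + w1, t1) + v *\<^sub>R (h2 + w2, t2) =
        ((u *\<^sub>R h1 + v *\<^sub>R h2) + (u *\<^sub>R w1 + v *\<^sub>R w2), u * t1 + v * t2)"
      by (simp add: algebra_simps)
    ultimately show "\<exists>h w t. u *\<^sub>R (h1 + w1, t1) + v *\<^sub>R (h2 + w2, t2) = (h + w, t) \<and> h \<in> H \<and> w \<in> W \<and> t < 0"
      by blast
  qed
  have ne1: "S1 \<noteq> {}" using V0 unfolding S1_def by blast
  have "(0 + 0, -1) \<in> S2" using H0 W0 unfolding S2_def by (intro CollectI exI[of _ 0] exI[of _ "-1"]) simp
  then have ne2: "S2 \<noteq> {}" by blast
  have dis: "S1 \<inter> S2 = {}"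
  proof (rule ccontr)
    assume "S1 \<inter> S2 \<noteq> {}"
    then obtain v h w t where v: "v \<in> V" and hw: "h \<in> H" "w \<in> W" "t < 0" and eq: "v = h + w" "s \<bullet> v = t"
      unfolding S1_def S2_def by auto
    have "w \<bullet> v = 0" using hw(2) v unfolding W_def perp_def by blast
    moreover have "w \<bullet> h = 0" using hw unfolding W_def perp_def by blast
    ultimately have "w \<bullet> w = 0" using eq by (simp add: inner_add_right)
    then have "w = 0" by simp
    then have "v \<in> H \<inter> V" using eq hw v by simp
    then have "s \<bullet> v \<ge> 0" using s by blast
    then show False using eq hw by simp
  qed
  obtain a b where ab: "a \<noteq> 0" "\<forall>x\<in>S1. a \<bullet> x \<le> b" "\<forall>x\<in>S2. a \<bullet> x \<ge> b"
    using separating_hyperplane_sets[OF c1 c2 ne1 ne2 dis] by blast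
  obtain a1 c where a: "a = (a1, c)" by (cases a)
  have S1i: "\<And>v. v \<in> V \<Longrightarrow> a1 \<bullet> v + c * (s \<bullet> v) \<le> b" using ab(2) a unfolding S1_def by auto
  have S2i: "\<And>h w t. h \<in> H \<Longrightarrow> w \<in> W \<Longrightarrow> t < 0 \<Longrightarrow> a1 \<bullet> (h + w) + c * t \<ge> b"
    using ab(3) a unfolding S2_def by force
  have orth: "a1 \<bullet> v + c * (s \<bullet> v) = 0" if v: "v \<in> V" for v
  proof -
    let ?q = "a1 \<bullet> v + c * (s \<bullet> v)"
    have "\<And>\<mu>::real. \<mu> > 0 \<Longrightarrow> - b \<le> \<mu> * (- ?q) + 0"
    proof -
      fix \<mu> :: real assume "\<mu> > 0"
      have "\<mu> *\<^sub>R v \<in> V" by (rule subspace_scale[OF assms(3) v])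
      then have "a1 \<bullet> (\<mu> *\<^sub>R v) + c * (s \<bullet> (\<mu> *\<^sub>R v)) \<le> b" by (rule S1i)
      then show "- b \<le> \<mu> * (- ?q) + 0" by (simp add: algebra_simps)
    qed
    then have 1: "0 \<le> - ?q" by (rule lin_bound)
    have "\<And>\<mu>::real. \<mu> > 0 \<Longrightarrow> - b \<le> \<mu> * ?q + 0"
    proof -
      fix \<mu> :: real assume "\<mu> > 0"
      have "(- \<mu>) *\<^sub>R v \<in> V" by (rule subspace_scale[OF assms(3) v])
      then have "a1 \<bullet> ((- \<mu>) *\<^sub>R v) + c * (s \<bullet> ((- \<mu>) *\<^sub>R v)) \<le> b" by (rule S1i)
      then show "- b \<le> \<mu> * ?q + 0" by (simp add: algebra_simps)
    qed
    then have 2: "0 \<le> ?q" by (rule lin_bound)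
    show ?thesis using 1 2 by simp
  qed
  have cle: "c \<le> 0"
  proof -
    have "\<And>\<mu>::real. \<mu> > 0 \<Longrightarrow> b \<le> \<mu> * (- c) + 0"
    proof -
      fix \<mu> :: real assume "\<mu> > 0"
      then have "a1 \<bullet> (0 + 0) + c * (- \<mu>) \<ge> b" using S2i[OF H0 W0, of "- \<mu>"] by simp
      then show "b \<le> \<mu> * (- c) + 0" by (simp add: algebra_simps)
    qed
    then have "0 \<le> - c" by (rule lin_bound)
    then show ?thesis by simp
  qed
  have hpos: "a1 \<bullet> h \<ge> 0" if h: "h \<in> H" for h
  proof -
    have "\<And>\<mu>::real. \<mu> > 0 \<Longrightarrow> b \<le> \<mu> * (a1 \<bullet> h) + (- c)"
    proof -
      fix \<mu> :: real assume l: "\<mu> > 0"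
      have "\<mu> *\<^sub>R h \<in> H" using mem_cone[OF assms(2) h] l by simp
      then have "a1 \<bullet> (\<mu> *\<^sub>R h + 0) + c * (- 1) \<ge> b" using S2i[OF _ W0, of "\<mu> *\<^sub>R h" "-1"] by simp
      then show "b \<le> \<mu> * (a1 \<bullet> h) + (- c)" by simp
    qed
    then show ?thesis by (rule lin_bound)
  qed
  have wperp: "a1 \<bullet> w = 0" if w: "w \<in> W" for w
  proof -
    have "\<And>\<mu>::real. \<mu> > 0 \<Longrightarrow> b \<le> \<mu> * (a1 \<bullet> w) + (- c)"
    proof -
      fix \<mu> :: real assume l: "\<mu> > 0"
      have "\<mu> *\<^sub>R w \<in> W" by (rule subspace_scale[OF sW w])
      then have "a1 \<bullet> (0 + \<mu> *\<^sub>R w) + c * (- 1) \<ge> b" using S2i[OF H0, of "\<mu> *\<^sub>R w" "-1"] by simp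
      then show "b \<le> \<mu> * (a1 \<bullet> w) + (- c)" by simp
    qed
    then have 1: "0 \<le> a1 \<bullet> w" by (rule lin_bound)
    have "\<And>\<mu>::real. \<mu> > 0 \<Longrightarrow> b \<le> \<mu> * (- (a1 \<bullet> w)) + (- c)"
    proof -
      fix \<mu> :: real assume l: "\<mu> > 0"
      have "(- \<mu>) *\<^sub>R w \<in> W" by (rule subspace_scale[OF sW w])
      then have "a1 \<bullet> (0 + (- \<mu>) *\<^sub>R w) + c * (- 1) \<ge> b" using S2i[OF H0, of "(- \<mu>) *\<^sub>R w" "-1"] by simp
      then show "b \<le> \<mu> * (- (a1 \<bullet> w)) + (- c)" by simp
    qed
    then have 2: "0 \<le> - (a1 \<bullet> w)" by (rule lin_bound)
    show ?thesis using 1 2 by simp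
  qed
  show ?thesis
  proof (cases "c = 0")
    case True
    then have a1: "a1 \<noteq> 0" using ab(1) a by (auto simp: zero_prod_def)
    have a1V: "a1 \<in> perp V" using orth True unfolding perp_def by simp
    have "a1 \<bullet> z = 0" using a1V assms(5) unfolding perp_def by blast
    have a1H: "a1 \<in> perp H"
      unfolding perp_def
    proof (clarify)
      fix h assume h: "h \<in> H"
      obtain \<epsilon> where ep: "\<epsilon> > 0" "(1 + \<epsilon>) *\<^sub>R z - \<epsilon> *\<^sub>R h \<in> H" using ri_extend[OF assms(4) h] by blast
      have "a1 \<bullet> ((1 + \<epsilon>) *\<^sub>R z - \<epsilon> *\<^sub>R h) \<ge> 0" using hpos[OF ep(2)] .
      then have "- \<epsilon> * (a1 \<bullet> h) \<ge> 0" using \<open>a1 \<bullet> z = 0\<close> by (simp add: inner_diff_right)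
      then have "a1 \<bullet> h \<le> 0" using ep(1) by (simp add: mult_le_0_iff)
      then show "a1 \<bullet> h = 0" using hpos[OF h] by simp
    qed
    have "a1 \<in> W" using a1V a1H unfolding W_def by blast
    then have "a1 \<bullet> a1 = 0" by (rule wperp)
    then show ?thesis using a1 by simp
  next
    case False
    then have cneg: "c < 0" using cle by simp
    define h0 where "h0 = (- 1 / c) *\<^sub>R a1"
    have "h0 \<in> dual_cone H"
      unfolding dual_cone_def h0_def using hpos cneg
      by (auto intro!: mult_nonneg_nonneg simp: divide_simps)
    moreover have "s - h0 \<in> perp V"
      unfolding perp_def
    proof (clarify)
      fix v assume v: "v \<in> V"
      have "(s - h0) \<bullet> v = (c * (s \<bullet> v) + a1 \<bullet> v) / c"
        using cneg by (simp add: h0_def inner_diff_left inner_add_left field_simps)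
      also have "\<dots> = 0" using orth[OF v] by simp
      finally show "(s - h0) \<bullet> v = 0" .
    qed
    ultimately show ?thesis by blast
  qed
qed


lemma seg_shrink:
  fixes K :: "'a::euclidean_space set"
  assumes "convex K" "x \<in> K" "x + e *\<^sub>R d \<in> K" "0 < e'" "e' \<le> e"
  shows "x + e' *\<^sub>R d \<in> K"
proof -
  have e: "e > 0" using assms by simp
  have "(1 - e'/e) *\<^sub>R x + (e'/e) *\<^sub>R (x + e *\<^sub>R d) \<in> K"
    using convexD[OF assms(1) assms(2) assms(3), of "1 - e'/e" "e'/e"] assms e by simp
  moreover have "(1 - e'/e) *\<^sub>R x + (e'/e) *\<^sub>R (x + e *\<^sub>R d) = x + e' *\<^sub>R d"
    using e by (simp add: algebra_simps)
  ultimately show ?thesis by simp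
qed

lemma tc_pre_convex:
  fixes K :: "'a::euclidean_space set"
  assumes "convex K" "x \<in> K"
  shows "convex {d. \<exists>\<epsilon>>0. x + \<epsilon> *\<^sub>R d \<in> K}"
  unfolding convex_def
proof (clarify)
  fix d1 d2 :: 'a and u v e1 e2 :: real
  assume uv: "0 \<le> u" "0 \<le> v" "u + v = 1" and e1: "e1 > 0" "x + e1 *\<^sub>R d1 \<in> K"
    and e2: "e2 > 0" "x + e2 *\<^sub>R d2 \<in> K"
  define e where "e = min e1 e2"
  have ep: "e > 0" using e1 e2 by (simp add: e_def)
  have k1: "x + e *\<^sub>R d1 \<in> K" using seg_shrink[OF assms e1(2) ep] by (simp add: e_def)
  have k2: "x + e *\<^sub>R d2 \<in> K" using seg_shrink[OF assms e2(2) ep] by (simp add: e_def)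
  have "u *\<^sub>R (x + e *\<^sub>R d1) + v *\<^sub>R (x + e *\<^sub>R d2) \<in> K" using convexD[OF assms(1) k1 k2] uv by simp
  moreover have "u *\<^sub>R (x + e *\<^sub>R d1) + v *\<^sub>R (x + e *\<^sub>R d2) = x + e *\<^sub>R (u *\<^sub>R d1 + v *\<^sub>R d2)"
  proof -
    have "u *\<^sub>R (x + e *\<^sub>R d1) + v *\<^sub>R (x + e *\<^sub>R d2) = (u + v) *\<^sub>R x + e *\<^sub>R (u *\<^sub>R d1 + v *\<^sub>R d2)"
      by (simp add: algebra_simps)
    then show ?thesis using uv by simp
  qed
  ultimately show "\<exists>\<epsilon>>0. x + \<epsilon> *\<^sub>R (u *\<^sub>R d1 + v *\<^sub>R d2) \<in> K" using ep by auto
qed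

lemma tc_pre_cone:
  fixes K :: "'a::euclidean_space set"
  assumes "x \<in> K"
  shows "cone {d. \<exists>\<epsilon>>0. x + \<epsilon> *\<^sub>R d \<in> K}"
  unfolding cone_def
proof (clarify)
  fix d :: 'a and c e :: real assume c: "0 \<le> c" and e: "e > 0" "x + e *\<^sub>R d \<in> K"
  show "\<exists>\<epsilon>>0. x + \<epsilon> *\<^sub>R (c *\<^sub>R d) \<in> K"
  proof (cases "c = 0")
    case True then show ?thesis using assms by (auto intro: exI[of _ 1])
  next
    case False
    then have "c > 0" using c by simp
    then have "e / c > 0" "x + (e / c) *\<^sub>R (c *\<^sub>R d) = x + e *\<^sub>R d" using e by auto
    then show ?thesis using e by metis
  qed
qed

lemma tc_sub: "{d. \<exists>\<epsilon>>0. x + \<epsilon> *\<^sub>R d \<in> K} \<subseteq> tangent_cone x K"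
  unfolding tangent_cone_def by (rule closure_subset)

lemma tc_props:
  fixes K :: "'a::euclidean_space set"
  assumes "convex K" "x \<in> K"
  shows "closed (tangent_cone x K)" "convex (tangent_cone x K)" "cone (tangent_cone x K)"
    "0 \<in> tangent_cone x K"
proof -
  show "closed (tangent_cone x K)" unfolding tangent_cone_def by simp
  show "convex (tangent_cone x K)" unfolding tangent_cone_def
    by (rule convex_closure[OF tc_pre_convex[OF assms]])
  show "cone (tangent_cone x K)" unfolding tangent_cone_def
    by (rule cone_closure[OF tc_pre_cone[OF assms(2)]])
  have "0 \<in> {d. \<exists>\<epsilon>>0. x + \<epsilon> *\<^sub>R d \<in> K}" using assms(2) by (auto intro: exI[of _ 1])
  then show "0 \<in> tangent_cone x K" using tc_sub by (rule subsetD[rotated])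
qed

lemma tc_contains:
  fixes K :: "'a::euclidean_space set"
  assumes "convex K" "cone K" "x \<in> K"
  shows "K \<subseteq> tangent_cone x K" "-x \<in> tangent_cone x K"
proof -
  have "K \<subseteq> {d. \<exists>\<epsilon>>0. x + \<epsilon> *\<^sub>R d \<in> K}"
  proof
    fix d assume "d \<in> K"
    then have "x + 1 *\<^sub>R d \<in> K" using cc_add[OF assms(1,2) assms(3)] by simp
    then show "d \<in> {d. \<exists>\<epsilon>>0. x + \<epsilon> *\<^sub>R d \<in> K}" by (auto intro: exI[of _ 1])
  qed
  then show "K \<subseteq> tangent_cone x K" using tc_sub by (rule subset_trans)
  have gen: "x + e *\<^sub>R (-x) = (1 - e) *\<^sub>R x" for e :: real by (simp add: scaleR_diff_left)
  have "x + (1/2) *\<^sub>R (-x) = (1/2) *\<^sub>R x" using gen[of "1/2"] by simp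
  moreover have "(1/2) *\<^sub>R x \<in> K" using mem_cone[OF assms(2,3), of "1/2"] by simp
  ultimately have "-x \<in> {d. \<exists>\<epsilon>>0. x + \<epsilon> *\<^sub>R d \<in> K}" by (auto intro!: exI[of _ "1/2"])
  then show "-x \<in> tangent_cone x K" using tc_sub by (rule subsetD[rotated])
qed

lemma tc_dual:
  fixes F :: "'a::euclidean_space set"
  assumes "s \<in> dual_cone F" "s \<bullet> x = 0"
  shows "s \<in> dual_cone (tangent_cone x F)"
proof -
  have "{d. \<exists>\<epsilon>>0. x + \<epsilon> *\<^sub>R d \<in> F} \<subseteq> {d. s \<bullet> d \<ge> 0}"
  proof
    fix d assume "d \<in> {d. \<exists>\<epsilon>>0. x + \<epsilon> *\<^sub>R d \<in> F}"
    then obtain e where e: "e > 0" "x + e *\<^sub>R d \<in> F" by blast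
    then have "s \<bullet> (x + e *\<^sub>R d) \<ge> 0" using assms(1) unfolding dual_cone_def by blast
    then have "e * (s \<bullet> d) \<ge> 0" using assms(2) by (simp add: inner_add_right)
    then show "d \<in> {d. s \<bullet> d \<ge> 0}" using e by (simp add: zero_le_mult_iff)
  qed
  moreover have "closed {d. s \<bullet> d \<ge> 0}" using closed_halfspace_ge[of 0 s] by simp
  ultimately have "tangent_cone x F \<subseteq> {d. s \<bullet> d \<ge> 0}"
    unfolding tangent_cone_def by (rule closure_minimal)
  then show ?thesis unfolding dual_cone_def by blast
qed

lemma tf_mono: "A \<subseteq> B \<Longrightarrow> tangent_family A \<subseteq> tangent_family B"
  unfolding tangent_family_def by blast

lemma tf_pow_mono: "A \<subseteq> B \<Longrightarrow> (tangent_family ^^ k) A \<subseteq> (tangent_family ^^ k) B"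
  by (induction k) (auto dest: tf_mono)

lemma ste_tangent:
  fixes K :: "'a::euclidean_space set"
  assumes "strongly_tangentially_exposed K" "x \<in> K"
  shows "strongly_tangentially_exposed (tangent_cone x K)"
proof -
  let ?T = "tangent_cone x K"
  have T1: "?T \<in> tangent_family {K}" unfolding tangent_family_def using assms(2) by blast
  have Tl: "?T \<in> lex_tangent_cones K" unfolding lex_tangent_cones_def
    using T1 by (intro UN_I[of 1]) auto
  have sub: "lex_tangent_cones ?T \<subseteq> lex_tangent_cones K"
  proof
    fix D assume "D \<in> lex_tangent_cones ?T"
    then obtain k where k: "k \<ge> 1" "D \<in> (tangent_family ^^ k) {?T}" unfolding lex_tangent_cones_def by auto
    have "{?T} \<subseteq> tangent_family {K}" using T1 by blast
    then have "D \<in> (tangent_family ^^ k) (tangent_family {K})" using tf_pow_mono k(2) by blast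
    then have "D \<in> (tangent_family ^^ Suc k) {K}" by (simp only: funpow_Suc_right comp_apply)
    then show "D \<in> lex_tangent_cones K" unfolding lex_tangent_cones_def by (intro UN_I[of "Suc k"]) auto
  qed
  show ?thesis using assms(1) Tl sub unfolding strongly_tangentially_exposed_def by blast
qed

definition lin :: "'a::euclidean_space set \<Rightarrow> 'a set" where
  "lin K = {x. x \<in> K \<and> -x \<in> K}"

lemma subspace_lin:
  fixes K :: "'a::euclidean_space set"
  assumes "convex K" "cone K" "K \<noteq> {}"
  shows "subspace (lin K)"
  unfolding subspace_def lin_def
proof (intro conjI ballI allI)
  show "0 \<in> {x. x \<in> K \<and> - x \<in> K}" using assms cone_contains_0 by auto
next
  fix x y assume "x \<in> {x. x \<in> K \<and> - x \<in> K}" "y \<in> {x. x \<in> K \<and> - x \<in> K}"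
  then have xy: "x \<in> K" "-x \<in> K" "y \<in> K" "-y \<in> K" by auto
  have "x + y \<in> K" using cc_add[OF assms(1,2) xy(1,3)] .
  moreover have "(-x) + (-y) \<in> K" using cc_add[OF assms(1,2) xy(2,4)] .
  moreover have "-(x + y) = (-x) + (-y)" by simp
  ultimately show "x + y \<in> {x. x \<in> K \<and> - x \<in> K}" by simp
next
  fix c :: real and x assume x: "x \<in> {x. x \<in> K \<and> - x \<in> K}"
  show "c *\<^sub>R x \<in> {x. x \<in> K \<and> - x \<in> K}"
  proof (cases "0 \<le> c")
    case True
    have xx: "x \<in> K" "-x \<in> K" using x by auto
    have "c *\<^sub>R x \<in> K" "c *\<^sub>R (-x) \<in> K" using mem_cone[OF assms(2) xx(1) True] mem_cone[OF assms(2) xx(2) True] by auto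
    then show ?thesis by simp
  next
    case False
    have xx: "x \<in> K" "-x \<in> K" using x by auto
    have nc: "-c \<ge> 0" using False by simp
    have "(-c) *\<^sub>R (-x) \<in> K" "(-c) *\<^sub>R x \<in> K" using mem_cone[OF assms(2) xx(2) nc] mem_cone[OF assms(2) xx(1) nc] by auto
    then show ?thesis by simp
  qed
qed


lemma face_eq_span:
  fixes K :: "'a::euclidean_space set"
  assumes "convex K" "cone K" "F face_of K" "F \<noteq> {}"
  shows "K \<inter> span F = F"
proof
  show "K \<inter> span F \<subseteq> F" using face_span[OF assms] by blast
  show "F \<subseteq> K \<inter> span F" using face_of_imp_subset[OF assms(3)] span_superset by blast
qed

lemma ri_case:
  fixes K :: "'a::euclidean_space set"
  assumes "closed K" "convex K" "cone K" "K \<noteq> {}" "F face_of K" "F \<noteq> {}"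
    and s: "s \<in> rel_interior (dual_cone F)"
  shows "\<exists>k\<in>dual_cone K. \<exists>p\<in>perp F. s = k + p"
proof -
  define C where "C = {k + p | k p. k \<in> dual_cone K \<and> p \<in> perp F}"
  have "dual_cone (K \<inter> span F) \<subseteq> closure C"
    using dual_sub_closure[OF assms(1-4), of F] unfolding C_def .
  then have d1: "dual_cone F \<subseteq> closure C" using face_eq_span[OF assms(2,3,5,6)] by simp
  have "C \<subseteq> dual_cone F"
  proof
    fix x assume "x \<in> C"
    then obtain k p where kp: "k \<in> dual_cone K" "p \<in> perp F" "x = k + p" unfolding C_def by blast
    have FK: "F \<subseteq> K" using face_of_imp_subset[OF assms(5)] .
    show "x \<in> dual_cone F"
      unfolding dual_cone_def
    proof (clarify)
      fix f assume f: "f \<in> F"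
      have "k \<bullet> f \<ge> 0" using kp(1) f FK unfolding dual_cone_def by blast
      moreover have "p \<bullet> f = 0" using kp(2) f unfolding perp_def by blast
      ultimately show "0 \<le> x \<bullet> f" using kp(3) by (simp add: inner_add_left)
    qed
  qed
  then have "closure C \<subseteq> dual_cone F" using closed_dual_cone by (rule closure_minimal)
  then have cl: "closure C = dual_cone F" using d1 by blast
  have eqC: "C = (\<Union>x\<in> dual_cone K. \<Union>y \<in> perp F. {x + y})" unfolding C_def by blast
  have cvx: "convex C" unfolding eqC by (rule convex_sums[OF convex_dual_cone subspace_imp_convex[OF subspace_perp]])
  have "s \<in> rel_interior (closure C)" using s cl by simp
  then have "s \<in> rel_interior C" using convex_rel_interior_closure[OF cvx] by simp
  then have "s \<in> C" using rel_interior_subset by blast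
  then show ?thesis unfolding C_def by blast
qed

lemma main_ind:
  fixes K :: "'a::euclidean_space set"
  shows "closed K \<Longrightarrow> convex K \<Longrightarrow> cone K \<Longrightarrow> K \<noteq> {} \<Longrightarrow> strongly_tangentially_exposed K \<Longrightarrow> nice K"
proof (induction "DIM('a) - dim (lin K)" arbitrary: K rule: less_induct)
  case less
  note IH = less.hyps
  note P = less.prems
  show "nice K" unfolding nice_def
  proof (intro allI impI ballI)
    fix F s assume Fh: "is_face F K \<and> F \<noteq> {} \<and> F \<noteq> K" and s: "s \<in> dual_cone F"
    from Fh have Ff: "F face_of K" "closed F" "F \<noteq> {}" "F \<noteq> K" by (auto simp: is_face_iff)
    have cF: "convex F" "cone F" using face_of_imp_convex[OF Ff(1)] face_cone[OF P(3) Ff(1) Ff(3)] by auto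
    show "\<exists>k\<in>dual_cone K. \<exists>p\<in>perp F. s = k + p"
    proof (cases "s \<in> rel_interior (dual_cone F)")
      case True
      then show ?thesis using ri_case[OF P(1-4) Ff(1) Ff(3)] by blast
    next
      case False
      obtain a where a: "a \<noteq> 0" "\<And>y. y \<in> dual_cone F \<Longrightarrow> a \<bullet> s \<le> a \<bullet> y"
          "\<And>y. y \<in> rel_interior (dual_cone F) \<Longrightarrow> a \<bullet> s < a \<bullet> y"
        using supporting_hyperplane_rel_boundary[OF convex_dual_cone s False] by blast
      have d0: "0 \<in> dual_cone F" by (simp add: dual_cone_def)
      have s2: "2 *\<^sub>R s \<in> dual_cone F" using s by (auto simp: dual_cone_def)
      have as: "a \<bullet> s = 0" using a(2)[OF d0] a(2)[OF s2] by simp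
      have "\<forall>b\<in>dual_cone F. b \<bullet> a \<ge> 0"
      proof
        fix b assume "b \<in> dual_cone F"
        then have "a \<bullet> s \<le> a \<bullet> b" by (rule a(2))
        then show "b \<bullet> a \<ge> 0" using as by (simp add: inner_commute)
      qed
      then have aF: "a \<in> F" by (rule bipolar[OF Ff(2) cF(1) cF(2) Ff(3)])
      obtain y0 where y0: "y0 \<in> rel_interior (dual_cone F)"
        using rel_interior_eq_empty[OF convex_dual_cone] d0 by blast
      have ay0: "a \<bullet> y0 > 0" using a(3)[OF y0] as by simp
      have y0F: "y0 \<in> dual_cone F" using y0 rel_interior_subset by blast
      have aK: "a \<in> K" using aF face_of_imp_subset[OF Ff(1)] by blast
      have nlin: "-a \<notin> K"
      proof
        assume "-a \<in> K"
        then have "-a \<in> F" using lin_in_face[OF P(3) Ff(1) Ff(3), of "-a"] aK by simp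
        then have "y0 \<bullet> (-a) \<ge> 0" using y0F unfolding dual_cone_def by blast
        then show False using ay0 by (simp add: inner_commute)
      qed
      define T where "T = tangent_cone a K"
      have Tp: "closed T" "convex T" "cone T" "0 \<in> T" using tc_props[OF P(2) aK] unfolding T_def by auto
      have KT: "K \<subseteq> T" and maT: "-a \<in> T" using tc_contains[OF P(2,3) aK] unfolding T_def by auto
      have aT: "a \<in> T" using KT aK by blast
      have steT: "strongly_tangentially_exposed T" using ste_tangent[OF P(5) aK] unfolding T_def .
      have teK: "tangentially_exposed K" using P(5) unfolding strongly_tangentially_exposed_def by blast
      have te: "T \<inter> span F = tangent_cone a F"
        using teK Fh aF unfolding tangentially_exposed_def T_def by blast
      define F' where "F' = tangent_cone a F"
      have F'p: "convex F'" "0 \<in> F'" using tc_props[OF cF(1) aF] unfolding F'_def by auto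
      have FF': "F \<subseteq> F'" using tc_contains[OF cF aF] unfolding F'_def by auto
      obtain z where z: "z \<in> rel_interior F'" using rel_interior_eq_empty[OF F'p(1)] F'p(2) by blast
      have zF': "z \<in> F'" using z rel_interior_subset by blast
      have F'T: "F' \<subseteq> T" and F'V: "F' \<subseteq> span F" using te unfolding F'_def by auto
      obtain H where H: "H face_of T" "z \<in> rel_interior H" using face_ri[OF Tp(2)] zF' F'T by blast
      have zH: "z \<in> H" using H(2) rel_interior_subset by blast
      have F'H: "F' \<subseteq> H" using subset_of_face_of[OF H(1) F'T] zH z by blast
      have HV: "H \<inter> span F = F'" using F'H F'V face_of_imp_subset[OF H(1)] te unfolding F'_def by blast
      have Hne: "H \<noteq> {}" using zH by blast
      have Hc: "convex H" "cone H" using face_of_imp_convex[OF H(1)] face_cone[OF Tp(3) H(1) Hne] by auto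
      have sF': "s \<in> dual_cone F'" using tc_dual[OF s, of a] as unfolding F'_def by (simp add: inner_commute)
      have sHV: "\<forall>y\<in>H \<inter> span F. s \<bullet> y \<ge> 0" using sF' HV unfolding dual_cone_def by blast
      obtain h where h: "h \<in> dual_cone H" "s - h \<in> perp (span F)"
        using slater[OF Hc subspace_span H(2) _ sHV] zF' F'V by blast
      have pp: "perp (span F) \<subseteq> perp F" unfolding perp_def using span_superset by blast
      have dTK: "dual_cone T \<subseteq> dual_cone K" using KT unfolding dual_cone_def by blast
      show ?thesis
      proof (cases "H = T")
        case True
        then have "h \<in> dual_cone K" using h(1) dTK by blast
        moreover have "s - h \<in> perp F" using h(2) pp by blast
        moreover have "s = h + (s - h)" by simp
        ultimately show ?thesis by blast
      next
        case False
        have lsub: "lin K \<subseteq> lin T" using KT unfolding lin_def by blast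
        have aL: "a \<in> lin T" "a \<notin> lin K" using aT maT nlin unfolding lin_def by auto
        have sK: "subspace (lin K)" using subspace_lin[OF P(2,3,4)] .
        have sT: "subspace (lin T)" using subspace_lin[OF Tp(2) Tp(3)] Tp(4) by blast
        have "lin K \<subset> lin T" using lsub aL by blast
        moreover have e1: "span (lin K) = lin K" by (rule span_eq_iff[THEN iffD2, OF sK])
        moreover have e2: "span (lin T) = lin T" by (rule span_eq_iff[THEN iffD2, OF sT])
        ultimately have "span (lin K) \<subset> span (lin T)" by (simp only:)
        then have "dim (lin K) < dim (lin T)" by (rule dim_psubset)
        moreover have "dim (lin T) \<le> DIM('a)" by (rule dim_subset_UNIV)
        ultimately have lt: "DIM('a) - dim (lin T) < DIM('a) - dim (lin K)" by linarith
        have Tne: "T \<noteq> {}" using Tp(4) by blast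
        have niceT: "nice T" using IH[OF lt Tp(1) Tp(2) Tp(3) Tne steT] .
        have Hface: "is_face H T \<and> H \<noteq> {} \<and> H \<noteq> T"
          using face_of_imp_closed[OF Tp(2) Tp(1) H(1)] H(1) Hne False by (simp add: is_face_iff)
        obtain k p where kp: "k \<in> dual_cone T" "p \<in> perp H" "h = k + p"
          using niceT Hface h(1) unfolding nice_def by blast
        have "perp H \<subseteq> perp F" using FF' F'H unfolding perp_def by blast
        then have "p \<in> perp F" "s - h \<in> perp F" using kp(2) h(2) pp by blast+
        then have "p + (s - h) \<in> perp F" using subspace_add[OF subspace_perp] by blast
        moreover have "k \<in> dual_cone K" using kp(1) dTK by blast
        moreover have "s = k + (p + (s - h))" using kp(3) by simp
        ultimately show ?thesis by blast
      qed
    qed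
  qed
qed

theorem theorem3p3:
  fixes K :: "'a::euclidean_space set"
  assumes "closed K" and "convex K" and "cone K" and "K \<noteq> {}"
    and "strongly_tangentially_exposed K"
  shows "facially_dual_complete K"
  unfolding facially_dual_complete_def
proof (intro allI impI)
  fix F assume Fh: "is_face F K \<and> F \<noteq> {} \<and> F \<noteq> K"
  have n: "nice K" using main_ind[OF assms] .
  have "{s + t | s t. s \<in> dual_cone K \<and> t \<in> perp F} = dual_cone F"
  proof
    show "{s + t | s t. s \<in> dual_cone K \<and> t \<in> perp F} \<subseteq> dual_cone F"
    proof
      fix x assume "x \<in> {s + t | s t. s \<in> dual_cone K \<and> t \<in> perp F}"
      then obtain k p where kp: "k \<in> dual_cone K" "p \<in> perp F" "x = k + p" by blast
      have FK: "F \<subseteq> K" using Fh unfolding is_face_def by blast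
      show "x \<in> dual_cone F"
        unfolding dual_cone_def
      proof (clarify)
        fix f assume f: "f \<in> F"
        have "k \<bullet> f \<ge> 0" using kp(1) f FK unfolding dual_cone_def by blast
        moreover have "p \<bullet> f = 0" using kp(2) f unfolding perp_def by blast
        ultimately show "0 \<le> x \<bullet> f" using kp(3) by (simp add: inner_add_left)
      qed
    qed
    show "dual_cone F \<subseteq> {s + t | s t. s \<in> dual_cone K \<and> t \<in> perp F}"
      using n Fh unfolding nice_def by blast
  qed
  then show "closed {s + t | s t. s \<in> dual_cone K \<and> t \<in> perp F}" using closed_dual_cone by simp
qed

end
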